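(* Let $g$ be a graphon whose degree function $d_g$ is monotonic nondecreasing on $[0,1]$. Suppose that $g$ maximizes the entropy $\mathcal S$ among all graphons $h$ with the same degree function, i.e. $\mathcal S(g)\ge \mathcal S(h)$ for every graphon $h$ with $d_h=d_g$ almost everywhere. Then $g$ is doubly monotonic nondecreasing: there is a Lebesgue-null set $N\subset[0,1]^2$ such that for all $x_1\le x_2$ and $y$ with $(x_1,y),(x_2,y)\notin N$ we have $g(x_1,y)\le g(x_2,y)$, and for all $y_1\le y_2$ and $x$ with $(x,y_1),(x,y_2)\notin N$ we have $g(x,y_1)\le g(x,y_2)$.
   Context: A graphon is a symmetric measurable function $g:[0,1]^2\to[0,1]$. Its degree function is $d_g(x)=\int_0^1 g(x,y)\,dy$. The Shannon entropy of a graphon is $\mathcal S(g)=\frac12\int_{[0,1]^2}S(g(x,y))\,dx\,dy$, where $S(w)=-w\ln w-(1-w)\ln(1-w)$ for $w\in[0,1]$ (with $0\ln 0=0$). *)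

theory Defs
  imports "HOL-Analysis.Analysis"
begin

definition graphon :: "(real \<Rightarrow> real \<Rightarrow> real) \<Rightarrow> bool" where
  "graphon g \<longleftrightarrow>
     (\<lambda>(x, y). g x y) \<in> borel_measurable (lebesgue_on ({0..1} \<times> {0..1})) \<and>
     (\<forall>x\<in>{0..1}. \<forall>y\<in>{0..1}. g x y = g y x \<and> 0 \<le> g x y \<and> g x y \<le> 1)"

definition degree_fun :: "(real \<Rightarrow> real \<Rightarrow> real) \<Rightarrow> real \<Rightarrow> real" where
  "degree_fun g x = integral\<^sup>L (lebesgue_on {0..1}) (\<lambda>y. g x y)"

definition xlnx :: "real \<Rightarrow> real" where
  "xlnx w = (if w = 0 then 0 else w * ln w)"

definition bin_entropy :: "real \<Rightarrow> real" where
  "bin_entropy w = - xlnx w - xlnx (1 - w)"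

definition graphon_entropy :: "(real \<Rightarrow> real \<Rightarrow> real) \<Rightarrow> real" where
  "graphon_entropy g =
     integral\<^sup>L (lebesgue_on ({0..1} \<times> {0..1})) (\<lambda>(x, y). bin_entropy (g x y)) / 2"

end

theory Submission
  imports Defs "HOL-Real_Asymp.Real_Asymp"
begin

lemma xlnx_cont: "continuous_on {0..} xlnx"
proof -
  have "continuous (at x within {0..}) xlnx" if "x \<ge> 0" for x
  proof (cases "x = 0")
    case True
    have "((\<lambda>w::real. w * ln w) \<longlongrightarrow> 0) (at_right 0)" by real_asymp
    then have "(xlnx \<longlongrightarrow> 0) (at_right 0)"
      by (rule Lim_transform_eventually) (auto simp: xlnx_def eventually_at_right_less)
    then have "(xlnx \<longlongrightarrow> xlnx 0) (at 0 within {0..})"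
      by (simp add: xlnx_def at_within_Ici_at_right)
    then show ?thesis using True by (simp add: continuous_within)
  next
    case False
    then have xp: "x > 0" using that by simp
    have "isCont (\<lambda>w. w * ln w) x" using xp by (intro continuous_intros) auto
    moreover have "\<forall>\<^sub>F w in nhds x. w * ln w = xlnx w"
      using eventually_nhds_in_open[of "{0<..}" x] xp
      by (auto elim!: eventually_mono simp: xlnx_def)
    ultimately have "isCont xlnx x"
      using isCont_cong[of "\<lambda>w. w * ln w" xlnx x] xp by (simp add: xlnx_def isCont_cong)
    then show ?thesis by (simp add: continuous_at_imp_continuous_within)
  qed
  then show ?thesis by (simp add: continuous_on_eq_continuous_within)
qed

lemma S_cont: "continuous_on {0..1} bin_entropy"
proof -
  have a: "continuous_on {0..1} xlnx" using xlnx_cont by (rule continuous_on_subset) auto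
  have "continuous_on {0..1} (\<lambda>w. xlnx (1 - w))"
    using xlnx_cont by (intro continuous_on_compose2[OF xlnx_cont]) (auto intro!: continuous_intros)
  then show ?thesis unfolding bin_entropy_def[abs_def] using a by (intro continuous_intros) auto
qed

lemma S_deriv:
  assumes "0 < u" "u < 1"
  shows "(bin_entropy has_real_derivative (ln (1 - u) - ln u)) (at u)"
proof -
  have d1: "((\<lambda>w. w * ln w) has_real_derivative (ln u + 1)) (at u)"
    using assms by (auto intro!: derivative_eq_intros)
  have d2: "((\<lambda>w. (1 - w) * ln (1 - w)) has_real_derivative (- ln (1 - u) - 1)) (at u)"
    using assms by (auto intro!: derivative_eq_intros)
  have d: "((\<lambda>w. - (w * ln w) - (1 - w) * ln (1 - w)) has_real_derivative (ln (1 - u) - ln u)) (at u)"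
    using DERIV_diff[OF DERIV_minus[OF d1] d2] by simp
  have "\<forall>\<^sub>F w in nhds u. - (w * ln w) - (1 - w) * ln (1 - w) = bin_entropy w"
    using eventually_nhds_in_open[of "{0<..<1}" u] assms
    by (auto elim!: eventually_mono simp: bin_entropy_def xlnx_def)
  then show ?thesis using d
    by (simp add: DERIV_cong_ev[OF refl _ refl, symmetric])
qed

lemma S_pair_strict:
  assumes "0 \<le> b" "a \<le> 1" "0 < t" "b + t \<le> a - t"
  shows "bin_entropy a + bin_entropy b < bin_entropy (a - t) + bin_entropy (b + t)"
proof -
  have c: "continuous_on {p..q} bin_entropy" if "0 \<le> p" "q \<le> 1" for p q
    using S_cont by (rule continuous_on_subset) (use that in auto)
  have dif: "bin_entropy differentiable (at x)" if "0 < x" "x < 1" for x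
    using S_deriv[OF that] real_differentiable_def by blast
  obtain l1 z1 where z1: "a - t < z1" "z1 < a" "DERIV bin_entropy z1 :> l1"
    "bin_entropy a - bin_entropy (a - t) = (a - (a - t)) * l1"
    using MVT[of "a - t" a bin_entropy] c[of "a - t" a] dif assms by force
  obtain l2 z2 where z2: "b < z2" "z2 < b + t" "DERIV bin_entropy z2 :> l2"
    "bin_entropy (b + t) - bin_entropy b = (b + t - b) * l2"
    using MVT[of b "b + t" bin_entropy] c[of b "b + t"] dif assms by force
  have l1: "l1 = ln (1 - z1) - ln z1"
    using DERIV_unique[OF z1(3) S_deriv] z1 z2 assms by auto
  have l2: "l2 = ln (1 - z2) - ln z2"
    using DERIV_unique[OF z2(3) S_deriv] z1 z2 assms by auto
  have "z2 < z1" using z1 z2 assms by auto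
  then have "ln (1 - z1) < ln (1 - z2)" "ln z2 < ln z1" using z1 z2 assms by auto
  then have "l1 < l2" using l1 l2 by simp
  then have "t * l1 < t * l2" using assms by simp
  then show ?thesis using z1(4) z2(4) by simp
qed

lemma S_pair:
  assumes "0 \<le> b" "a \<le> 1" "0 \<le> t" "b + t \<le> a - t"
  shows "bin_entropy a + bin_entropy b \<le> bin_entropy (a - t) + bin_entropy (b + t)"
  using S_pair_strict[OF assms(1,2) _ assms(4)] assms(3) by (cases "t = 0") auto

lemma xlnx_bound: "0 \<le> w \<Longrightarrow> w \<le> 1 \<Longrightarrow> \<bar>xlnx w\<bar> \<le> 1"
proof (cases "w = 0")
  case False
  assume w: "0 \<le> w" "w \<le> 1"
  then have wp: "w > 0" using False by simp
  have "ln (1/w) \<le> 1/w - 1" using wp by (intro ln_le_minus_one) auto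
  then have "- ln w \<le> 1/w - 1" using wp by (simp add: ln_div)
  then have "- (w * ln w) \<le> 1 - w" using wp by (simp add: field_simps)
  moreover have "ln w \<le> 0" using w wp by simp
  then have "w * ln w \<le> 0" using wp by (simp add: mult_nonneg_nonpos)
  ultimately show ?thesis using w wp False by (simp add: xlnx_def abs_if)
qed (simp add: xlnx_def)

lemma S_bound: "0 \<le> w \<Longrightarrow> w \<le> 1 \<Longrightarrow> \<bar>bin_entropy w\<bar> \<le> 2"
  using xlnx_bound[of w] xlnx_bound[of "1 - w"] unfolding bin_entropy_def abs_le_iff by linarith

lemma S_measurable[measurable]: "bin_entropy \<in> borel_measurable borel"
  unfolding bin_entropy_def[abs_def] xlnx_def[abs_def] by measurable

abbreviation pos :: "real \<Rightarrow> real" where "pos r \<equiv> max r 0"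

lemma int_bound:
  fixes f :: "'a \<Rightarrow> real" and M :: "'a measure" and B :: real
  assumes "A \<in> sets M" "emeasure M A < \<infinity>" "f \<in> borel_measurable M" "\<And>x. \<bar>f x\<bar> \<le> B * indicator A x"
  shows "integrable M f"
proof -
  have i: "integrable M (\<lambda>x. B * indicator A x)"
    using assms(1,2) by (intro integrable_mult_right integrable_real_indicator) auto
  show ?thesis
    apply (rule Bochner_Integration.integrable_bound[OF i assms(3)])
    using assms(4) by (auto intro!: AE_I2 order.trans[OF _ abs_ge_self])
qed

lemma int01[simp]: "integrable lborel (indicator {a..b::real} :: real \<Rightarrow> real)"
  by (rule integrable_real_indicator) (auto simp: emeasure_lborel_Icc_eq)

locale gsetup =
  fixes G :: "real \<Rightarrow> real \<Rightarrow> real" and Z :: "real set"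
  assumes G_meas: "case_prod G \<in> borel_measurable (lborel \<Otimes>\<^sub>M lborel)"
    and G_sym: "\<And>x y. G x y = G y x"
    and G_nn: "\<And>x y. 0 \<le> G x y" and G_le1: "\<And>x y. G x y \<le> 1"
    and Z_null: "Z \<in> null_sets lborel"
    and D_mono: "\<And>x1 x2. x1 \<in> {0..1} \<Longrightarrow> x2 \<in> {0..1} \<Longrightarrow> x1 \<notin> Z \<Longrightarrow> x2 \<notin> Z \<Longrightarrow> x1 \<le> x2 \<Longrightarrow>
        (\<integral>y. indicator {0..1} y * G x1 y \<partial>lborel) \<le> (\<integral>y. indicator {0..1} y * G x2 y \<partial>lborel)"
    and G_max: "\<And>H. case_prod H \<in> borel_measurable (lborel \<Otimes>\<^sub>M lborel) \<Longrightarrow> (\<And>x y. H x y = H y x) \<Longrightarrow>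
        (\<And>x y. x \<in> {0..1} \<Longrightarrow> y \<in> {0..1} \<Longrightarrow> 0 \<le> H x y \<and> H x y \<le> 1) \<Longrightarrow>
        (\<And>x. x \<in> {0..1} \<Longrightarrow> (\<integral>y. indicator {0..1} y * H x y \<partial>lborel) = (\<integral>y. indicator {0..1} y * G x y \<partial>lborel)) \<Longrightarrow>
        (\<integral>z. indicator ({0..1}\<times>{0..1}) z * bin_entropy (case_prod H z) \<partial>(lborel \<Otimes>\<^sub>M lborel))
          \<le> (\<integral>z. indicator ({0..1}\<times>{0..1}) z * bin_entropy (case_prod G z) \<partial>(lborel \<Otimes>\<^sub>M lborel))"
begin

lemma G_meas'[measurable (raw)]:
  assumes "f \<in> borel_measurable M" "h \<in> borel_measurable M"
  shows "(\<lambda>x. G (f x) (h x)) \<in> borel_measurable M"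
proof -
  have "(\<lambda>x. (f x, h x)) \<in> M \<rightarrow>\<^sub>M lborel \<Otimes>\<^sub>M lborel"
    using assms by (intro measurable_Pair) (auto simp: measurable_lborel2)
  from measurable_compose[OF this G_meas] show ?thesis by simp
qed

lemma G_diff[simp]: "G a y - G b y' \<le> 1" "- 1 \<le> G a y - G b y'"
  using G_le1[of a y] G_nn[of b y'] G_nn[of a y] G_le1[of b y'] by linarith+

lemma G_abs[simp]: "\<bar>G a y\<bar> \<le> 1"
  using G_le1[of a y] G_nn[of a y] by simp

lemma row_int: "integrable lborel (\<lambda>y. indicator {0..1} y * G x y)"
  by (rule int_bound[where A="{0..1}" and B=1]) (auto simp: indicator_def G_nn G_le1 abs_le_iff)

end

locale gint = gsetup +
  fixes c p q :: real
  assumes c_pos: "0 < c" and p_nn: "0 \<le> p" and pq: "p \<le> q" and qc: "q + c \<le> 1" and small: "q - p < c"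
begin

definition "I = {p..q}"
definition "J = {p+c..q+c}"
definition "Y = {0..1} - I - J"
definition "\<alpha> x = (\<integral>y. indicator Y y * pos (G (x+c) y - G x y) \<partial>lborel)"
definition "\<beta> x = (\<integral>y. indicator Y y * pos (G x y - G (x+c) y) \<partial>lborel)"
definition "w x y = indicator I x * indicator Y y * (\<beta> x * pos (G (x+c) y - G x y) - \<alpha> x * pos (G x y - G (x+c) y)) / 2"
definition "P x y = w x y - w (x - c) y + w y x - w (y - c) x"
definition "H x y = G x y + P x y"

lemma sets_IJY[measurable]: "I \<in> sets borel" "J \<in> sets borel" "Y \<in> sets borel"
  unfolding I_def J_def Y_def by auto

lemma Y_sub: "y \<in> Y \<Longrightarrow> y \<in> {0..1} \<and> y \<notin> I \<and> y \<notin> J"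
  by (auto simp: Y_def)

lemma IJ_facts: "x \<in> I \<Longrightarrow> x \<in> {0..1} \<and> x \<notin> J \<and> x + c \<in> J \<and> x - c \<notin> I \<and> x - c \<notin> J"
  "x \<in> J \<Longrightarrow> x \<in> {0..1} \<and> x \<notin> I \<and> x - c \<in> I"
  using c_pos p_nn pq qc small by (auto simp: I_def J_def)

lemma alpha_meas[measurable]: "\<alpha> \<in> borel_measurable lborel"
  unfolding \<alpha>_def[abs_def] by measurable

lemma beta_meas[measurable]: "\<beta> \<in> borel_measurable lborel"
  unfolding \<beta>_def[abs_def] by measurable

lemma int_Y: 
  fixes f :: "real \<Rightarrow> real"
  assumes "f \<in> borel_measurable lborel" "\<And>y. \<bar>f y\<bar> \<le> 1"
  shows "integrable lborel (\<lambda>y. indicator Y y * f y)"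
  apply (rule int_bound[where A="{0..1}" and B=1])
  using assms Y_sub by (auto simp: indicator_def)

lemma int_Y_le:
  fixes f :: "real \<Rightarrow> real"
  assumes "f \<in> borel_measurable lborel" "\<And>y. 0 \<le> f y" "\<And>y. f y \<le> 1"
  shows "0 \<le> (\<integral>y. indicator Y y * f y \<partial>lborel)" "(\<integral>y. indicator Y y * f y \<partial>lborel) \<le> 1"
proof -
  show "0 \<le> (\<integral>y. indicator Y y * f y \<partial>lborel)" by (intro integral_nonneg_AE AE_I2) (simp add: assms indicator_def)
  have "(\<integral>y. indicator Y y * f y \<partial>lborel) \<le> (\<integral>y. indicator {0..1::real} y \<partial>lborel)"
    apply (rule Bochner_Integration.integral_mono)
    apply (rule int_Y)
    using assms apply (simp, simp add: abs_le_iff)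
    apply simp
    using assms Y_sub by (auto simp: indicator_def abs_le_iff simp del: int01)
  then show "(\<integral>y. indicator Y y * f y \<partial>lborel) \<le> 1" by simp
qed

lemma alpha_bd: "0 \<le> \<alpha> x" "\<alpha> x \<le> 1"
  unfolding \<alpha>_def by (auto intro!: int_Y_le)

lemma beta_bd: "0 \<le> \<beta> x" "\<beta> x \<le> 1"
  unfolding \<beta>_def by (auto intro!: int_Y_le)

lemma w_meas[measurable]: "case_prod w \<in> borel_measurable (lborel \<Otimes>\<^sub>M lborel)"
  unfolding w_def[abs_def] by measurable

lemma w_supp: "w x y \<noteq> 0 \<Longrightarrow> x \<in> I \<and> y \<in> Y"
  by (auto simp: w_def indicator_def split: if_splits)

lemma w_bd:
  assumes "x \<in> I" "y \<in> Y"
  shows "G (x+c) y \<le> G x y \<Longrightarrow> - (G x y - G (x+c) y) / 2 \<le> w x y \<and> w x y \<le> 0"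
    and "G x y \<le> G (x+c) y \<Longrightarrow> 0 \<le> w x y \<and> w x y \<le> (G (x+c) y - G x y) / 2"
proof -
  assume a: "G (x+c) y \<le> G x y"
  have "\<alpha> x * (G x y - G (x + c) y) \<le> 1 * (G x y - G (x + c) y)"
    using alpha_bd a by (intro mult_right_mono) auto
  then show "- (G x y - G (x+c) y) / 2 \<le> w x y \<and> w x y \<le> 0"
    using assms a alpha_bd by (auto simp: w_def max_def)
next
  assume a: "G x y \<le> G (x+c) y"
  have "\<beta> x * (G (x + c) y - G x y) \<le> 1 * (G (x + c) y - G x y)"
    using beta_bd a by (intro mult_right_mono) auto
  then show "0 \<le> w x y \<and> w x y \<le> (G (x+c) y - G x y) / 2"
    using assms a beta_bd by (auto simp: w_def max_def)
qed

lemma w_zero: "\<not> (a \<in> I \<and> b \<in> Y) \<Longrightarrow> w a b = 0"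
  using w_supp by blast

lemma shift_IJ: "a - c \<in> I \<longleftrightarrow> a \<in> J"
  by (auto simp: I_def J_def)

lemma w_abs: "\<bar>w a b\<bar> \<le> 1"
proof -
  have p1: "pos (G (a+c) b - G a b) \<le> 1" "pos (G a b - G (a+c) b) \<le> 1" by simp_all
  have "0 \<le> \<beta> a * pos (G (a+c) b - G a b)" "\<beta> a * pos (G (a+c) b - G a b) \<le> 1"
    using beta_bd[of a] p1 by (auto intro!: mult_le_one)
  moreover have "0 \<le> \<alpha> a * pos (G a b - G (a+c) b)" "\<alpha> a * pos (G a b - G (a+c) b) \<le> 1"
    using alpha_bd[of a] p1 by (auto intro!: mult_le_one)
  ultimately show ?thesis by (auto simp: w_def indicator_def)
qed

lemma P_a: "x \<in> I \<Longrightarrow> y \<in> Y \<Longrightarrow> P x y = w x y"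
proof -
  assume x: "x \<in> I" and y: "y \<in> Y"
  have "w (x - c) y = 0" by (rule w_zero) (use IJ_facts(1)[OF x] in auto)
  moreover have "w y x = 0" by (rule w_zero) (use Y_sub[OF y] in auto)
  moreover have "w (y - c) x = 0" by (rule w_zero) (use Y_sub[of x] x in auto)
  ultimately show ?thesis by (simp add: P_def)
qed

lemma P_b: "x \<in> J \<Longrightarrow> y \<in> Y \<Longrightarrow> P x y = - w (x - c) y"
proof -
  assume x: "x \<in> J" and y: "y \<in> Y"
  have "w x y = 0" by (rule w_zero) (use IJ_facts(2)[OF x] in auto)
  moreover have "w y x = 0" by (rule w_zero) (use Y_sub[OF y] in auto)
  moreover have "w (y - c) x = 0" by (rule w_zero) (use Y_sub[of x] x in auto)
  ultimately show ?thesis by (simp add: P_def)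
qed

lemma P_sym: "P x y = P y x"
  unfolding P_def by simp

lemma P_e: "\<not> ((x \<in> I \<union> J \<and> y \<in> Y) \<or> (y \<in> I \<union> J \<and> x \<in> Y)) \<Longrightarrow> P x y = 0"
  unfolding P_def using shift_IJ by (auto simp: w_zero)

lemma H_sym: "H x y = H y x"
  unfolding H_def using P_sym G_sym by simp

lemma P_meas[measurable]: "case_prod P \<in> borel_measurable (lborel \<Otimes>\<^sub>M lborel)"
proof -
  have [measurable]: "(\<lambda>z. w (f z) (h z)) \<in> borel_measurable M" 
    if "f \<in> borel_measurable M" "h \<in> borel_measurable M" for f h and M :: "'a measure"
  proof -
    have "(\<lambda>z. (f z, h z)) \<in> M \<rightarrow>\<^sub>M lborel \<Otimes>\<^sub>M lborel"
      using that by (intro measurable_Pair) (auto simp: measurable_lborel2)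
    from measurable_compose[OF this w_meas] show ?thesis by simp
  qed
  show ?thesis unfolding P_def[abs_def] by measurable
qed

lemma H_meas[measurable]: "case_prod H \<in> borel_measurable (lborel \<Otimes>\<^sub>M lborel)"
  unfolding H_def[abs_def] by measurable

lemma H_range_a: "x \<in> I \<Longrightarrow> y \<in> Y \<Longrightarrow> 0 \<le> H x y \<and> H x y \<le> 1"
proof -
  assume x: "x \<in> I" and y: "y \<in> Y"
  have h: "H x y = G x y + w x y" by (simp add: H_def P_a[OF x y])
  have g: "0 \<le> G x y" "G x y \<le> 1" "0 \<le> G (x+c) y" "G (x+c) y \<le> 1" by (simp_all add: G_nn G_le1)
  show ?thesis
  proof (cases "G (x+c) y \<le> G x y")
    case True
    with w_bd(1)[OF x y] have "- (G x y - G (x+c) y) / 2 \<le> w x y" "w x y \<le> 0" by auto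
    then show ?thesis using g h by argo
  next
    case False
    with w_bd(2)[OF x y] have "0 \<le> w x y" "w x y \<le> (G (x+c) y - G x y) / 2" by auto
    then show ?thesis using g h by argo
  qed
qed

lemma H_range_b: "x \<in> J \<Longrightarrow> y \<in> Y \<Longrightarrow> 0 \<le> H x y \<and> H x y \<le> 1"
proof -
  assume x: "x \<in> J" and y: "y \<in> Y"
  define x' where "x' = x - c"
  have x': "x' \<in> I" "x = x' + c" using x IJ_facts(2)[of x] by (auto simp: x'_def)
  have h: "H x y = G (x'+c) y - w x' y" using P_b[OF x y] by (simp add: H_def x'_def)
  have g: "0 \<le> G x' y" "G x' y \<le> 1" "0 \<le> G (x'+c) y" "G (x'+c) y \<le> 1" by (simp_all add: G_nn G_le1)
  show ?thesis
  proof (cases "G (x'+c) y \<le> G x' y")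
    case True
    with w_bd(1)[OF x'(1) y] have "- (G x' y - G (x'+c) y) / 2 \<le> w x' y" "w x' y \<le> 0" by auto
    then show ?thesis using g h by argo
  next
    case False
    with w_bd(2)[OF x'(1) y] have "0 \<le> w x' y" "w x' y \<le> (G (x'+c) y - G x' y) / 2" by auto
    then show ?thesis using g h by argo
  qed
qed

lemma H_range: "0 \<le> H x y \<and> H x y \<le> 1"
proof -
  consider "x \<in> I \<and> y \<in> Y" | "x \<in> J \<and> y \<in> Y" | "y \<in> I \<and> x \<in> Y" | "y \<in> J \<and> x \<in> Y"
    | "\<not> ((x \<in> I \<union> J \<and> y \<in> Y) \<or> (y \<in> I \<union> J \<and> x \<in> Y))" by blast
  then show ?thesis
  proof cases
    case 5 then show ?thesis using P_e[OF 5] G_nn[of x y] G_le1[of x y] by (simp add: H_def)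
  qed (use H_range_a H_range_b H_sym in metis)+
qed

lemma int_row_gen:
  fixes f :: "real \<Rightarrow> real"
  assumes "f \<in> borel_measurable lborel" "\<And>y. \<bar>f y\<bar> \<le> 1" "\<And>y. f y \<noteq> 0 \<Longrightarrow> y \<in> {0..1}"
  shows "integrable lborel f"
  apply (rule int_bound[where A="{0..1}" and B=1])
  using assms by (auto simp: indicator_def)

lemma int_w_row: "(\<integral>y. w x y \<partial>lborel) = 0"
proof -
  have i1: "integrable lborel (\<lambda>y. indicator Y y * pos (G (x+c) y - G x y))"
    by (rule int_Y) (auto simp: abs_le_iff)
  have i2: "integrable lborel (\<lambda>y. indicator Y y * pos (G x y - G (x+c) y))"
    by (rule int_Y) (auto simp: abs_le_iff)
  have "(\<integral>y. w x y \<partial>lborel) = (\<integral>y. (indicator I x / 2) * (\<beta> x * (indicator Y y * pos (G (x+c) y - G x y))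
      - \<alpha> x * (indicator Y y * pos (G x y - G (x+c) y))) \<partial>lborel)"
    by (intro Bochner_Integration.integral_cong) (simp_all add: w_def indicator_def field_simps)
  also have "\<dots> = (indicator I x / 2) * (\<beta> x * \<alpha> x - \<alpha> x * \<beta> x)"
    using i1 i2 by (simp add: \<alpha>_def[symmetric] \<beta>_def[symmetric])
  finally show ?thesis by simp
qed

lemma row_P: "x \<in> {0..1} \<Longrightarrow> (\<integral>y. indicator {0..1} y * P x y \<partial>lborel) = 0"
proof -
  assume x: "x \<in> {0..1}"
  have mw[measurable]: "(\<lambda>y. w (f y) (h y)) \<in> borel_measurable lborel" 
    if "f \<in> borel_measurable lborel" "h \<in> borel_measurable lborel" for f h
  proof -
    have "(\<lambda>z. (f z, h z)) \<in> lborel \<rightarrow>\<^sub>M lborel \<Otimes>\<^sub>M lborel"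
      using that by (intro measurable_Pair) (auto simp: measurable_lborel2)
    from measurable_compose[OF this w_meas] show ?thesis by simp
  qed
  have s1: "w x y \<noteq> 0 \<Longrightarrow> y \<in> {0..1}" for y using w_supp Y_sub by blast
  have s2: "w (x - c) y \<noteq> 0 \<Longrightarrow> y \<in> {0..1}" for y using w_supp Y_sub by blast
  have s3: "w y x \<noteq> 0 \<Longrightarrow> y \<in> {0..1}" for y using w_supp IJ_facts by blast
  have s4: "w (y - c) x \<noteq> 0 \<Longrightarrow> y \<in> {0..1}" for y using w_supp IJ_facts shift_IJ by blast
  have i1: "integrable lborel (\<lambda>y. w x y)" by (rule int_row_gen) (use s1 w_abs in auto)
  have i2: "integrable lborel (\<lambda>y. w (x - c) y)" by (rule int_row_gen) (use s2 w_abs in auto)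
  have i3: "integrable lborel (\<lambda>y. w y x)" by (rule int_row_gen) (use s3 w_abs in auto)
  have i4: "integrable lborel (\<lambda>y. w (y - c) x)" by (rule int_row_gen) (use s4 w_abs in auto)
  have eq: "indicator {0..1} y * P x y = w x y - w (x - c) y + w y x - w (y - c) x" for y
  proof (cases "y \<in> {0..1}")
    case False
    then have "w x y = 0" "w (x - c) y = 0" "w y x = 0" "w (y - c) x = 0"
      using s1[of y] s2[of y] s3[of y] s4[of y] by auto
    then show ?thesis using False by (simp add: P_def)
  qed (simp add: P_def)
  have tr: "(\<integral>y. w (y - c) x \<partial>lborel) = (\<integral>y. w y x \<partial>lborel)"
    using lborel_integral_real_affine[where f="\<lambda>y. w (y - c) x" and c=1 and t=c] by simp
  show ?thesis
    unfolding eq using i1 i2 i3 i4 tr int_w_row[of x] int_w_row[of "x - c"] by simp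
qed

lemma row_H: "x \<in> {0..1} \<Longrightarrow> (\<integral>y. indicator {0..1} y * H x y \<partial>lborel) = (\<integral>y. indicator {0..1} y * G x y \<partial>lborel)"
proof -
  assume x: "x \<in> {0..1}"
  have iP: "integrable lborel (\<lambda>y. indicator {0..1} y * P x y)"
  proof (rule int_row_gen)
    show "(\<lambda>y. indicator {0..1} y * P x y) \<in> borel_measurable lborel" by measurable
    show "\<bar>indicator {0..1} y * P x y\<bar> \<le> 1" for y
    proof -
      have "\<bar>P x y\<bar> \<le> 1"
        using H_range[of x y] G_nn[of x y] G_le1[of x y] P_e[of x y]
        by (auto simp: H_def abs_le_iff)
      then show ?thesis by (auto simp: indicator_def)
    qed
  qed (auto simp: indicator_def)
  have "(\<lambda>y. indicator {0..1} y * H x y) = (\<lambda>y. indicator {0..1} y * G x y + indicator {0..1} y * P x y)"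
    by (auto simp: H_def algebra_simps)
  then show ?thesis using iP row_int[of x] row_P[OF x] by simp
qed

end

abbreviation M2 :: "(real \<times> real) measure" where "M2 \<equiv> lborel \<Otimes>\<^sub>M lborel"

lemma sets_M2: "sets M2 = sets borel"
  by (simp only: lborel_prod sets_lborel)

lemma M2_shift:
  fixes f :: "real \<times> real \<Rightarrow> real"
  assumes f: "f \<in> borel_measurable M2"
  shows "(\<integral>z. f (fst z + a, snd z) \<partial>M2) = integral\<^sup>L M2 f"
proof -
  have fb: "f \<in> borel_measurable borel" using f measurable_cong_sets[OF sets_M2 refl] by blast
  have m: "((+) (a, 0::real)) \<in> lborel \<rightarrow>\<^sub>M borel" by simp
  have "integral\<^sup>L M2 f = integral\<^sup>L lborel f" by (simp add: lborel_prod)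
  also have "\<dots> = integral\<^sup>L (distr lborel borel ((+) (a, 0::real))) f" by (simp add: lborel_distr_plus)
  also have "\<dots> = (\<integral>z. f ((a, 0) + z) \<partial>lborel)" by (rule integral_distr[OF m fb])
  also have "\<dots> = (\<integral>z. f (fst z + a, snd z) \<partial>lborel)"
    by (intro Bochner_Integration.integral_cong refl) (auto simp: add.commute)
  also have "\<dots> = (\<integral>z. f (fst z + a, snd z) \<partial>M2)"
    by (simp add: lborel_prod)
  finally show ?thesis ..
qed

lemma M2_swap:
  fixes f :: "real \<times> real \<Rightarrow> real"
  assumes f: "f \<in> borel_measurable M2"
  shows "(\<integral>z. f (snd z, fst z) \<partial>M2) = integral\<^sup>L M2 f"
  using lborel_pair.integral_product_swap[OF f] by (simp add: case_prod_beta')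

lemma int2:
  fixes f :: "real \<times> real \<Rightarrow> real"
  assumes "f \<in> borel_measurable M2" "\<And>z. \<bar>f z\<bar> \<le> B * indicator ({0..1}\<times>{0..1}) z"
  shows "integrable M2 f"
proof (rule int_bound[OF _ _ assms])
  show "{0..1::real} \<times> {0..1::real} \<in> sets M2" by simp
  show "emeasure M2 ({0..1} \<times> {0..1}) < \<infinity>"
    by (simp add: lborel.emeasure_pair_measure_Times ennreal_mult_less_top)
qed

lemma meas2:
  assumes "case_prod F \<in> borel_measurable M2" "f \<in> borel_measurable M" "h \<in> borel_measurable M"
  shows "(\<lambda>x. F (f x) (h x)) \<in> borel_measurable M"
proof -
  have "(\<lambda>x. (f x, h x)) \<in> M \<rightarrow>\<^sub>M M2"
    using assms by (intro measurable_Pair) (auto simp: measurable_lborel2)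
  from measurable_compose[OF this assms(1)] show ?thesis by simp
qed

context gint
begin

lemmas H_meas'[measurable (raw)] = meas2[OF H_meas]
lemmas w_meas'[measurable (raw)] = meas2[OF w_meas]

definition "Dl x y = bin_entropy (H x y) - bin_entropy (G x y)"
definition "E x y = bin_entropy (G x y + w x y) - bin_entropy (G x y)
   + (bin_entropy (G (x+c) y - w x y) - bin_entropy (G (x+c) y))"

lemma Dl_meas[measurable]: "case_prod Dl \<in> borel_measurable M2"
  unfolding Dl_def[abs_def] using H_meas G_meas by measurable

lemma E_meas[measurable]: "case_prod E \<in> borel_measurable M2"
  unfolding E_def[abs_def] using w_meas G_meas by measurable

lemmas Dl_meas'[measurable (raw)] = meas2[OF Dl_meas]
lemmas E_meas'[measurable (raw)] = meas2[OF E_meas]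

lemma Dl_sym: "Dl x y = Dl y x"
  by (simp add: Dl_def H_sym G_sym)

lemma Dl_bd: "\<bar>Dl x y\<bar> \<le> 4"
  using S_bound[of "H x y"] S_bound[of "G x y"] H_range[of x y] G_nn[of x y] G_le1[of x y]
  unfolding Dl_def abs_le_iff by auto

lemma Dl_zero: "\<not> ((x \<in> I \<union> J \<and> y \<in> Y) \<or> (y \<in> I \<union> J \<and> x \<in> Y)) \<Longrightarrow> Dl x y = 0"
  using P_e by (simp add: Dl_def H_def)

lemma IJ_disj: "indicator I x + indicator J x = (indicator (I \<union> J) x :: real)"
  using IJ_facts by (auto simp: indicator_def)

definition "D1 x y = (indicator I x + indicator J x) * indicator Y y * Dl x y"

lemma D1_meas[measurable]: "case_prod D1 \<in> borel_measurable M2"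
  unfolding D1_def[abs_def] by measurable

lemmas D1_meas'[measurable (raw)] = meas2[OF D1_meas]

lemma split_pt: "indicator ({0..1}\<times>{0..1}) (x, y) * Dl x y = D1 x y + D1 y x"
proof -
  consider "x \<in> I \<union> J \<and> y \<in> Y" | "y \<in> I \<union> J \<and> x \<in> Y"
    | "\<not> ((x \<in> I \<union> J \<and> y \<in> Y) \<or> (y \<in> I \<union> J \<and> x \<in> Y))" by blast
  then show ?thesis
  proof cases
    case 1
    then have "x \<in> {0..1}" "y \<in> {0..1}" "y \<notin> I \<union> J" using IJ_facts Y_sub by auto
    then show ?thesis using 1 IJ_facts by (auto simp: D1_def indicator_def)
  next
    case 2
    then have "x \<in> {0..1}" "y \<in> {0..1}" "x \<notin> I \<union> J" using IJ_facts Y_sub by auto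
    then show ?thesis using 2 IJ_facts Dl_sym[of x y] by (auto simp: D1_def indicator_def)
  next
    case 3
    then show ?thesis using Dl_zero[OF 3] Dl_sym[of x y] by (simp add: D1_def)
  qed
qed

lemma D1_bd: "\<bar>D1 x y\<bar> \<le> 8 * indicator ({0..1}\<times>{0..1}) (x,y)"
proof (cases "(x \<in> I \<or> x \<in> J) \<and> y \<in> Y")
  case True
  then have xy: "x \<in> {0..1}" "y \<in> {0..1}" using IJ_facts Y_sub by auto
  have a: "\<bar>indicator I x + indicator J x :: real\<bar> \<le> 2" by (auto simp: indicator_def)
  have e: "D1 x y = (indicator I x + indicator J x) * Dl x y" using True by (simp add: D1_def)
  have "\<bar>D1 x y\<bar> \<le> 2 * 4" unfolding e abs_mult using a Dl_bd[of x y] by (intro mult_mono) auto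
  then show ?thesis using xy by simp
next
  case False
  then have "D1 x y = 0"
  proof (cases "y \<in> Y")
    case True
    then have "x \<notin> I" "x \<notin> J" using False by auto
    then show ?thesis by (simp add: D1_def)
  qed (simp add: D1_def)
  then show ?thesis by simp
qed

lemma int_D1: "integrable M2 (case_prod D1)"
  by (rule int2[where B=8]) (auto simp: D1_bd split: prod.splits)

lemma int_D1': "integrable M2 (\<lambda>z. D1 (snd z) (fst z))"
proof (rule int2[where B=8])
  show "\<bar>D1 (snd z) (fst z)\<bar> \<le> 8 * indicator ({0..1}\<times>{0..1}) z" for z
    using D1_bd[of "snd z" "fst z"] by (cases z) (auto simp: indicator_def)
qed measurable

lemma ent_split: "(\<integral>z. indicator ({0..1}\<times>{0..1}) z * Dl (fst z) (snd z) \<partial>M2) = 2 * integral\<^sup>L M2 (case_prod D1)"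
proof -
  have a: "(\<integral>z. indicator ({0..1}\<times>{0..1}) z * Dl (fst z) (snd z) \<partial>M2)
      = (\<integral>z. case_prod D1 z + D1 (snd z) (fst z) \<partial>M2)"
    apply (intro Bochner_Integration.integral_cong refl)
    subgoal for z by (cases z) (simp add: split_pt)
    done
  have b: "(\<integral>z. case_prod D1 z + D1 (snd z) (fst z) \<partial>M2) = integral\<^sup>L M2 (case_prod D1) + (\<integral>z. D1 (snd z) (fst z) \<partial>M2)"
    by (rule Bochner_Integration.integral_add[OF int_D1 int_D1'])
  have c: "(\<integral>z. D1 (snd z) (fst z) \<partial>M2) = integral\<^sup>L M2 (case_prod D1)"
    using M2_swap[OF D1_meas] by simp
  show ?thesis unfolding a b c by simp
qed

lemma E_nonneg:
  assumes x: "x \<in> I" and y: "y \<in> Y"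
  shows "0 \<le> E x y" and "w x y \<noteq> 0 \<Longrightarrow> 0 < E x y"
proof -
  define a where "a = G x y"
  define b where "b = G (x+c) y"
  have ab: "0 \<le> a" "a \<le> 1" "0 \<le> b" "b \<le> 1" by (simp_all add: a_def b_def G_nn G_le1)
  have Eab: "E x y = bin_entropy (a + w x y) + bin_entropy (b - w x y) - (bin_entropy a + bin_entropy b)"
    by (simp add: E_def a_def b_def)
  have "0 \<le> E x y \<and> (w x y \<noteq> 0 \<longrightarrow> 0 < E x y)"
  proof (cases "b \<le> a")
    case True
    with w_bd(1)[OF x y] have w: "- (a - b) / 2 \<le> w x y" "w x y \<le> 0" by (auto simp: a_def b_def)
    have 1: "bin_entropy a + bin_entropy b \<le> bin_entropy (a - (- w x y)) + bin_entropy (b + (- w x y))"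
      by (rule S_pair) (use ab w in auto)
    have 2: "w x y \<noteq> 0 \<Longrightarrow> bin_entropy a + bin_entropy b < bin_entropy (a - (- w x y)) + bin_entropy (b + (- w x y))"
      by (rule S_pair_strict) (use ab w in auto)
    show ?thesis
    proof (intro conjI impI)
      show "0 \<le> E x y" using 1 unfolding Eab by (simp; linarith)
      show "0 < E x y" if "w x y \<noteq> 0" using 2[OF that] unfolding Eab by (simp; linarith)
    qed
  next
    case False
    with w_bd(2)[OF x y] have w: "0 \<le> w x y" "w x y \<le> (b - a) / 2" by (auto simp: a_def b_def)
    have 1: "bin_entropy b + bin_entropy a \<le> bin_entropy (b - w x y) + bin_entropy (a + w x y)"
      by (rule S_pair) (use ab w in auto)
    have 2: "w x y \<noteq> 0 \<Longrightarrow> bin_entropy b + bin_entropy a < bin_entropy (b - w x y) + bin_entropy (a + w x y)"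
      by (rule S_pair_strict) (use ab w in auto)
    show ?thesis
    proof (intro conjI impI)
      show "0 \<le> E x y" using 1 unfolding Eab by linarith
      show "0 < E x y" if "w x y \<noteq> 0" using 2[OF that] unfolding Eab by linarith
    qed
  qed
  then show "0 \<le> E x y" and "w x y \<noteq> 0 \<Longrightarrow> 0 < E x y" by auto
qed

lemma E_Dl: "x \<in> I \<Longrightarrow> y \<in> Y \<Longrightarrow> E x y = Dl x y + Dl (x+c) y"
proof -
  assume x: "x \<in> I" and y: "y \<in> Y"
  have "x + c \<in> J" using IJ_facts(1)[OF x] by simp
  then have "H (x+c) y = G (x+c) y - w x y" using P_b[of "x+c" y] y by (simp add: H_def)
  moreover have "H x y = G x y + w x y" by (simp add: H_def P_a[OF x y])
  ultimately show ?thesis by (simp add: E_def Dl_def)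
qed

definition "IYE x y = indicator I x * indicator Y y * E x y"

lemma IYE_meas[measurable]: "case_prod IYE \<in> borel_measurable M2"
  unfolding IYE_def[abs_def] by measurable

lemma IYE_nonneg: "0 \<le> IYE x y"
  using E_nonneg(1)[of x y] by (auto simp: IYE_def indicator_def)

lemma IYE_bd: "\<bar>IYE x y\<bar> \<le> 8 * indicator ({0..1}\<times>{0..1}) (x,y)"
proof (cases "x \<in> I \<and> y \<in> Y")
  case True
  then have xy: "x \<in> {0..1}" "y \<in> {0..1}" using IJ_facts Y_sub by auto
  have "\<bar>E x y\<bar> \<le> 8" using E_Dl[of x y] True Dl_bd[of x y] Dl_bd[of "x+c" y] by simp
  then show ?thesis using True xy by (simp add: IYE_def)
next
  case False
  then have "IYE x y = 0" by (auto simp: IYE_def)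
  then show ?thesis by simp
qed

lemma int_IYE: "integrable M2 (case_prod IYE)"
  by (rule int2[where B=8]) (auto simp: IYE_bd split: prod.splits)

lemma D1_decomp: "D1 x y = indicator I x * indicator Y y * Dl x y + indicator J x * indicator Y y * Dl x y"
  by (simp add: D1_def algebra_simps)

lemma int_IJ:
  "integrable M2 (\<lambda>z. indicator I (fst z) * indicator Y (snd z) * Dl (fst z) (snd z))"
  "integrable M2 (\<lambda>z. indicator J (fst z) * indicator Y (snd z) * Dl (fst z) (snd z))"
  "integrable M2 (\<lambda>z. indicator I (fst z) * indicator Y (snd z) * Dl (fst z + c) (snd z))"
proof -
  have b: "\<bar>indicator A (fst z) * indicator Y (snd z) * Dl u (snd z)\<bar> \<le> 4 * indicator ({0..1}\<times>{0..1}) z"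
    if "A \<subseteq> {0..1}" for A u z
  proof (cases "fst z \<in> A \<and> snd z \<in> Y")
    case True
    then have "fst z \<in> {0..1}" "snd z \<in> {0..1}" using that Y_sub by auto
    then have "indicator ({0..1}\<times>{0..1}) z = (1::real)" by (cases z) (simp add: indicator_def)
    then show ?thesis using True Dl_bd[of u "snd z"] by simp
  qed (auto simp: indicator_def)
  have IJ01: "I \<subseteq> {0..1}" "J \<subseteq> {0..1}" using IJ_facts by auto
  show "integrable M2 (\<lambda>z. indicator I (fst z) * indicator Y (snd z) * Dl (fst z) (snd z))"
    by (rule int2[where B=4]) (use b[OF IJ01(1)] in auto)
  show "integrable M2 (\<lambda>z. indicator J (fst z) * indicator Y (snd z) * Dl (fst z) (snd z))"
    by (rule int2[where B=4]) (use b[OF IJ01(2)] in auto)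
  show "integrable M2 (\<lambda>z. indicator I (fst z) * indicator Y (snd z) * Dl (fst z + c) (snd z))"
    by (rule int2[where B=4]) (use b[OF IJ01(1)] in auto)
qed

lemma ent_shift: "integral\<^sup>L M2 (case_prod D1) = integral\<^sup>L M2 (case_prod IYE)"
proof -
  have a: "integral\<^sup>L M2 (case_prod D1) = (\<integral>z. indicator I (fst z) * indicator Y (snd z) * Dl (fst z) (snd z) \<partial>M2)
     + (\<integral>z. indicator J (fst z) * indicator Y (snd z) * Dl (fst z) (snd z) \<partial>M2)"
    unfolding D1_decomp case_prod_beta by (rule Bochner_Integration.integral_add[OF int_IJ(1,2)])
  have sh: "(\<integral>z. indicator J (fst z) * indicator Y (snd z) * Dl (fst z) (snd z) \<partial>M2)
      = (\<integral>z. indicator J (fst z + c) * indicator Y (snd z) * Dl (fst z + c) (snd z) \<partial>M2)"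
  proof -
    have m: "(\<lambda>z. indicator J (fst z) * indicator Y (snd z) * Dl (fst z) (snd z)) \<in> borel_measurable M2"
      by measurable
    from M2_shift[OF m, of c] show ?thesis by simp
  qed
  have ind: "indicator J (u + c) = (indicator I u :: real)" for u
    using shift_IJ[of "u + c"] by (simp add: indicator_def)
  have b: "integral\<^sup>L M2 (case_prod IYE) = (\<integral>z. indicator I (fst z) * indicator Y (snd z) * Dl (fst z) (snd z) \<partial>M2)
     + (\<integral>z. indicator I (fst z) * indicator Y (snd z) * Dl (fst z + c) (snd z) \<partial>M2)"
  proof -
    have "integral\<^sup>L M2 (case_prod IYE) = (\<integral>z. indicator I (fst z) * indicator Y (snd z) * Dl (fst z) (snd z)
       + indicator I (fst z) * indicator Y (snd z) * Dl (fst z + c) (snd z) \<partial>M2)"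
      apply (intro Bochner_Integration.integral_cong refl)
      subgoal for z by (cases z) (auto simp: IYE_def E_Dl indicator_def algebra_simps)
      done
    then show ?thesis by (simp add: Bochner_Integration.integral_add[OF int_IJ(1,3)])
  qed
  show ?thesis unfolding a b sh ind ..
qed

lemma ent_main: "(\<integral>z. indicator ({0..1}\<times>{0..1}) z * bin_entropy (case_prod H z) \<partial>M2)
   - (\<integral>z. indicator ({0..1}\<times>{0..1}) z * bin_entropy (case_prod G z) \<partial>M2) = 2 * integral\<^sup>L M2 (case_prod IYE)"
proof -
  have iH: "integrable M2 (\<lambda>z. indicator ({0..1}\<times>{0..1}) z * bin_entropy (case_prod H z))"
  proof (rule int2[where B=2])
    show "\<bar>indicator ({0..1}\<times>{0..1}) z * bin_entropy (case_prod H z)\<bar> \<le> 2 * indicator ({0..1}\<times>{0..1}) z" for z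
      using S_bound[of "case_prod H z"] H_range[of "fst z" "snd z"] by (cases z) (auto simp: indicator_def)
  qed measurable
  have iG: "integrable M2 (\<lambda>z. indicator ({0..1}\<times>{0..1}) z * bin_entropy (case_prod G z))"
  proof (rule int2[where B=2])
    show "\<bar>indicator ({0..1}\<times>{0..1}) z * bin_entropy (case_prod G z)\<bar> \<le> 2 * indicator ({0..1}\<times>{0..1}) z" for z
      using S_bound[of "case_prod G z"] G_nn[of "fst z" "snd z"] G_le1[of "fst z" "snd z"] by (cases z) (auto simp: indicator_def)
  next
    show "(\<lambda>z. indicator ({0..1}\<times>{0..1}) z * bin_entropy (case_prod G z)) \<in> borel_measurable M2"
      using G_meas by measurable
  qed
  have "(\<integral>z. indicator ({0..1}\<times>{0..1}) z * bin_entropy (case_prod H z) \<partial>M2)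
   - (\<integral>z. indicator ({0..1}\<times>{0..1}) z * bin_entropy (case_prod G z) \<partial>M2)
   = (\<integral>z. indicator ({0..1}\<times>{0..1}) z * bin_entropy (case_prod H z) - indicator ({0..1}\<times>{0..1}) z * bin_entropy (case_prod G z) \<partial>M2)"
    by (rule Bochner_Integration.integral_diff[OF iH iG, symmetric])
  also have "\<dots> = (\<integral>z. indicator ({0..1}\<times>{0..1}) z * Dl (fst z) (snd z) \<partial>M2)"
    by (intro Bochner_Integration.integral_cong refl) (auto simp: Dl_def algebra_simps split: prod.splits)
  also have "\<dots> = 2 * integral\<^sup>L M2 (case_prod IYE)" using ent_split ent_shift by simp
  finally show ?thesis .
qed

lemma w_AE: "AE x in lborel. AE y in lborel. x \<in> I \<and> y \<in> Y \<longrightarrow> w x y = 0"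
proof -
  have "(\<integral>z. indicator ({0..1}\<times>{0..1}) z * bin_entropy (case_prod H z) \<partial>M2)
          \<le> (\<integral>z. indicator ({0..1}\<times>{0..1}) z * bin_entropy (case_prod G z) \<partial>M2)"
    by (rule G_max[OF H_meas H_sym]) (use H_range row_H in auto)
  then have le: "integral\<^sup>L M2 (case_prod IYE) \<le> 0" using ent_main by simp
  have ge: "0 \<le> integral\<^sup>L M2 (case_prod IYE)"
    by (intro integral_nonneg_AE AE_I2) (auto simp: IYE_nonneg split: prod.splits)
  have "AE z in M2. case_prod IYE z = 0"
    using integral_nonneg_eq_0_iff_AE[OF int_IYE] le ge IYE_nonneg by (auto split: prod.splits)
  then have "AE z in M2. fst z \<in> I \<and> snd z \<in> Y \<longrightarrow> w (fst z) (snd z) = 0"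
  proof eventually_elim
    case (elim z)
    obtain a b where z: "z = (a, b)" by (cases z)
    show ?case
    proof (intro impI)
      assume "fst z \<in> I \<and> snd z \<in> Y"
      then have ab: "a \<in> I" "b \<in> Y" using z by auto
      then have "E a b = 0" using elim z by (simp add: IYE_def)
      then show "w (fst z) (snd z) = 0" using E_nonneg(2)[OF ab] z by force
    qed
  qed
  from lborel_pair.AE_pair[OF this] show ?thesis by simp
qed

end

lemma AE_shift:
  fixes Z :: "real set"
  assumes "Z \<in> null_sets lborel"
  shows "AE x in lborel. a + x \<notin> Z"
proof -
  have Zs: "Z \<in> sets borel" using assms by (simp add: null_sets_def)
  have e: "distr lborel borel ((+) a) = (lborel :: real measure)" by (rule lborel_distr_plus)
  have "AE z in distr lborel borel ((+) a). z \<notin> Z" by (subst e) (rule AE_not_in[OF assms])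
  then show ?thesis
    by (subst (asm) AE_distr_iff) (use Zs in auto)
qed

context gint
begin

lemma ab_zero:
  assumes x: "x \<in> I" and ae: "AE y in lborel. x \<in> I \<and> y \<in> Y \<longrightarrow> w x y = 0"
  shows "\<alpha> x * \<beta> x = 0"
proof (rule ccontr)
  assume "\<alpha> x * \<beta> x \<noteq> 0"
  then have a: "\<alpha> x > 0" "\<beta> x > 0" using alpha_bd[of x] beta_bd[of x] by (auto simp: less_le)
  have "AE y in lborel. indicator Y y * pos (G (x+c) y - G x y) = 0"
    using ae
  proof eventually_elim
    case (elim y)
    show ?case
    proof (cases "y \<in> Y")
      case True
      then have "w x y = 0" using elim x by simp
      then have e: "\<beta> x * pos (G (x+c) y - G x y) = \<alpha> x * pos (G x y - G (x+c) y)"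
        using x True by (simp add: w_def)
      show ?thesis
      proof (rule ccontr)
        assume "indicator Y y * pos (G (x+c) y - G x y) \<noteq> 0"
        then have g: "G (x+c) y - G x y > 0" using True by (auto simp: max_def split: if_splits)
        then have "pos (G x y - G (x+c) y) = 0" by simp
        then have "\<beta> x * pos (G (x+c) y - G x y) = 0" using e by simp
        then show False using a g by simp
      qed
    qed simp
  qed
  then have "\<alpha> x = 0" unfolding \<alpha>_def by (rule integral_eq_zero_AE)
  then show False using a by simp
qed

lemma intI: "(\<integral>y. indicator I y \<partial>lborel) = q - p" "(\<integral>y. indicator J y \<partial>lborel) = q - p"
  using pq by (simp_all add: I_def J_def)

lemma intI': "integrable lborel (indicator I :: real \<Rightarrow> real)" "integrable lborel (indicator J :: real \<Rightarrow> real)"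
  by (simp_all add: I_def J_def)

lemma bound_pt:
  assumes x: "x \<in> I" and ab: "\<alpha> x * \<beta> x = 0" and z1: "x \<notin> Z" and z2: "x + c \<notin> Z"
  shows "(\<integral>y. indicator {0..1} y * pos (G x y - G (x+c) y) \<partial>lborel) \<le> 4 * (q - p)"
proof -
  have x01: "x \<in> {0..1}" "x + c \<in> {0..1}" using IJ_facts(1)[OF x] IJ_facts(2)[of "x+c"] by auto
  have mono: "(\<integral>y. indicator {0..1} y * G x y \<partial>lborel) \<le> (\<integral>y. indicator {0..1} y * G (x+c) y \<partial>lborel)"
    by (rule D_mono) (use x01 z1 z2 c_pos in auto)
  have iu: "integrable lborel (\<lambda>y. indicator {0..1} y * G x y - indicator {0..1} y * G (x+c) y)"
    using row_int[of x] row_int[of "x+c"] by simp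
  have du: "(\<integral>y. indicator {0..1} y * G x y - indicator {0..1} y * G (x+c) y \<partial>lborel) \<le> 0"
    using mono Bochner_Integration.integral_diff[OF row_int[of x] row_int[of "x+c"]] by simp
  have iYu: "integrable lborel (\<lambda>y. indicator Y y * (G x y - G (x+c) y))"
    by (rule int_Y) (auto simp: abs_le_iff)
  have iYp: "integrable lborel (\<lambda>y. indicator Y y * pos (G x y - G (x+c) y))"
    by (rule int_Y) (auto simp: abs_le_iff)
  have iYm: "integrable lborel (\<lambda>y. indicator Y y * pos (G (x+c) y - G x y))"
    by (rule int_Y) (auto simp: abs_le_iff)
  have bma: "\<beta> x - \<alpha> x = (\<integral>y. indicator Y y * (G x y - G (x+c) y) \<partial>lborel)"
  proof -
    have "\<beta> x - \<alpha> x = (\<integral>y. indicator Y y * pos (G x y - G (x+c) y) - indicator Y y * pos (G (x+c) y - G x y) \<partial>lborel)"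
      unfolding \<alpha>_def \<beta>_def by (rule Bochner_Integration.integral_diff[OF iYp iYm, symmetric])
    also have "\<dots> = (\<integral>y. indicator Y y * (G x y - G (x+c) y) \<partial>lborel)"
      by (intro Bochner_Integration.integral_cong refl) (auto simp: max_def indicator_def)
    finally show ?thesis .
  qed
  have A1: "(\<integral>y. indicator Y y * (G x y - G (x+c) y) \<partial>lborel) \<le> 2 * (q - p)"
  proof -
    have "(\<integral>y. indicator Y y * (G x y - G (x+c) y) \<partial>lborel)
        \<le> (\<integral>y. (indicator {0..1} y * G x y - indicator {0..1} y * G (x+c) y) + (indicator I y + indicator J y) \<partial>lborel)"
    proof (rule Bochner_Integration.integral_mono[OF iYu])
      show "integrable lborel (\<lambda>y. (indicator {0..1} y * G x y - indicator {0..1} y * G (x+c) y) + (indicator I y + indicator J y))"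
        using iu intI' by simp
      show "indicator Y y * (G x y - G (x+c) y) \<le> (indicator {0..1} y * G x y - indicator {0..1} y * G (x+c) y) + (indicator I y + indicator J y)" for y
      proof (cases "y \<in> Y")
        case True then show ?thesis using Y_sub[OF True] by (simp add: indicator_def)
      next
        case False
        show ?thesis
        proof (cases "y \<in> {0..1}")
          case True
          then have "y \<in> I \<or> y \<in> J" using False by (auto simp: Y_def)
          then have ind: "indicator I y + indicator J y \<ge> (1::real)" by (auto simp: indicator_def)
          have i1: "indicator Y y = (0::real)" using False by simp
          have i2: "indicator {0..1} y = (1::real)" using True by simp
          show ?thesis unfolding i1 i2 using ind G_diff(2)[of x y "x+c" y] by linarith
        next
          case F2: False
          then have "y \<notin> I" "y \<notin> J" using IJ_facts by auto
          then show ?thesis using False F2 by (auto simp: indicator_def)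
        qed
      qed
    qed
    also have "\<dots> = (\<integral>y. indicator {0..1} y * G x y - indicator {0..1} y * G (x+c) y \<partial>lborel) + 2 * (q - p)"
      using iu intI intI' by simp
    finally show ?thesis using du by simp
  qed
  have B1: "(\<integral>y. indicator {0..1} y * pos (G x y - G (x+c) y) \<partial>lborel) \<le> \<beta> x + 2 * (q - p)"
  proof -
    have "(\<integral>y. indicator {0..1} y * pos (G x y - G (x+c) y) \<partial>lborel)
        \<le> (\<integral>y. indicator Y y * pos (G x y - G (x+c) y) + (indicator I y + indicator J y) \<partial>lborel)"
    proof (rule Bochner_Integration.integral_mono)
      show "integrable lborel (\<lambda>y. indicator {0..1} y * pos (G x y - G (x+c) y))"
        by (rule int_bound[where A="{0..1}" and B=1]) (auto simp: indicator_def)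
      show "integrable lborel (\<lambda>y. indicator Y y * pos (G x y - G (x+c) y) + (indicator I y + indicator J y))"
        using iYp intI' by simp
      show "indicator {0..1} y * pos (G x y - G (x+c) y) \<le> indicator Y y * pos (G x y - G (x+c) y) + (indicator I y + indicator J y)" for y
      proof (cases "y \<in> Y")
        case True then show ?thesis using Y_sub[OF True] by (simp add: indicator_def)
      next
        case False
        show ?thesis
        proof (cases "y \<in> {0..1}")
          case True
          then have "y \<in> I \<or> y \<in> J" using False by (auto simp: Y_def)
          then have ind: "indicator I y + indicator J y \<ge> (1::real)" by (auto simp: indicator_def)
          have i1: "indicator Y y = (0::real)" using False by simp
          have i2: "indicator {0..1} y = (1::real)" using True by simp
          have "pos (G x y - G (x+c) y) \<le> 1" using G_diff(1)[of x y "x+c" y] by simp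
          then show ?thesis unfolding i1 i2 using ind by (metis add_0 mult_1 mult_zero_left order_trans)
        next
          case F2: False
          then have "y \<notin> I" "y \<notin> J" using IJ_facts by auto
          then show ?thesis using False F2 by (auto simp: indicator_def)
        qed
      qed
    qed
    also have "\<dots> = \<beta> x + 2 * (q - p)"
      using iYp intI intI' by (simp add: \<beta>_def)
    finally show ?thesis .
  qed
  have "\<beta> x \<le> 2 * (q - p)"
  proof (cases "\<alpha> x = 0")
    case True then show ?thesis using bma A1 by simp
  next
    case False then have "\<beta> x = 0" using ab by simp
    then show ?thesis using pq by simp
  qed
  then show ?thesis using B1 by simp
qed

lemma claim_interval:
  "AE x in lborel. x \<in> I \<longrightarrow> (\<integral>y. indicator {0..1} y * pos (G x y - G (x+c) y) \<partial>lborel) \<le> 4 * (q - p)"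
proof -
  have "AE x in lborel. x \<in> I \<longrightarrow> \<alpha> x * \<beta> x = 0"
    using w_AE
  proof eventually_elim
    case (elim x) then show ?case using ab_zero by blast
  qed
  moreover have "AE x in lborel. x \<notin> Z" by (rule AE_not_in[OF Z_null])
  moreover have "AE x in lborel. c + x \<notin> Z" by (rule AE_shift[OF Z_null])
  ultimately show ?thesis
  proof eventually_elim
    case (elim x) then show ?case using bound_pt[of x] by (simp add: add.commute)
  qed
qed

end

lemma AE_interval_ex:
  assumes "AE t in lborel. P t" "a < (b::real)"
  shows "\<exists>t. a < t \<and> t < b \<and> P t"
proof (rule ccontr)
  assume "\<not> ?thesis"
  then have sub: "{a<..<b} \<subseteq> {t \<in> space lborel. \<not> P t}" by auto
  from assms(1) obtain N where N: "{t \<in> space lborel. \<not> P t} \<subseteq> N" "emeasure lborel N = 0" "N \<in> sets lborel"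
    by (rule AE_E)
  have "emeasure lborel {a<..<b} \<le> emeasure lborel N"
    by (rule emeasure_mono) (use sub N in auto)
  then show False using N assms(2) by simp
qed

lemma AE_M2_shift:
  assumes P: "{z \<in> space M2. P z} \<in> sets M2" and ae: "AE z in M2. P z"
  shows "AE z in M2. P (fst z + a, snd z)"
proof -
  have Pb: "{z \<in> space borel. P z} \<in> sets borel" using P unfolding sets_M2 by (simp add: space_pair_measure)
  have e: "distr lborel borel ((+) (a, 0::real)) = (lborel :: (real \<times> real) measure)" by (rule lborel_distr_plus)
  have "AE z in distr lborel borel ((+) (a, 0::real)). P z" by (subst e) (metis ae lborel_prod)
  then have "AE z in lborel. P ((a, 0) + z)"
    by (subst (asm) AE_distr_iff) (use Pb in auto)
  then have "AE z in lborel. P (fst z + a, snd z)"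
  proof eventually_elim
    case (elim z) then show ?case by (cases z) (simp add: add.commute)
  qed
  then show ?thesis by (metis lborel_prod)
qed

lemma AE_lborel_trans:
  fixes x :: real
  assumes P: "{t \<in> space borel. P t} \<in> sets borel" and ae: "AE c in lborel. P (x + c)"
  shows "AE t in lborel. P t"
proof -
  have e: "distr lborel borel ((+) x) = (lborel :: real measure)" by (rule lborel_distr_plus)
  have "AE t in distr lborel borel ((+) x). P t"
    by (subst AE_distr_iff) (use P ae in auto)
  then show ?thesis unfolding e .
qed

lemma AE_lborel_neg:
  assumes P: "{t \<in> space borel. P t} \<in> sets borel" and ae: "AE c in lborel. P (- c :: real)"
  shows "AE t in lborel. P t"
proof -
  have e: "distr lborel borel uminus = (lborel :: real measure)" by (rule lborel_distr_uminus)
  have "AE t in distr lborel borel uminus. P t"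
    by (subst AE_distr_iff) (use P ae in auto)
  then show ?thesis unfolding e .
qed

context gsetup
begin

lemma claim_C:
  assumes c: "0 < c" "c < 1"
  shows "AE x in lborel. 0 \<le> x \<and> x \<le> 1 - c \<longrightarrow> (AE y in lborel. 0 \<le> y \<and> y \<le> 1 \<longrightarrow> G x y \<le> G (x+c) y)"
proof -
  define V where "V x = (\<integral>y. indicator {0..1} y * pos (G x y - G (x+c) y) \<partial>lborel)" for x
  define l where "l n = c / (real n + 2)" for n :: nat
  define pp where "pp n j = real j * l n" for n j :: nat
  define qq where "qq n j = min ((real j + 1) * l n) (1 - c)" for n j :: nat
  have lpos: "0 < l n" "l n < c" for n
  proof -
    have d: "1 < real n + 2" by simp
    show "0 < l n" unfolding l_def using c d by simp
    show "l n < c" unfolding l_def using c d by (simp add: divide_less_eq)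
  qed
  have gi: "gint G Z c (pp n j) (qq n j)" if "pp n j \<le> 1 - c" for n j
  proof (rule gint.intro[OF gsetup_axioms], unfold_locales)
    show "0 < c" by fact
    show "0 \<le> pp n j" using lpos[of n] by (simp add: pp_def)
    show "pp n j \<le> qq n j" using that lpos[of n] by (auto simp: pp_def qq_def algebra_simps)
    show "qq n j + c \<le> 1" by (simp add: qq_def)
    have "qq n j - pp n j \<le> l n" by (simp add: qq_def pp_def algebra_simps)
    then show "qq n j - pp n j < c" using lpos[of n] by simp
  qed
  have ae: "AE x in lborel. \<forall>n j. pp n j \<le> 1 - c \<longrightarrow> x \<in> {pp n j..qq n j} \<longrightarrow> V x \<le> 4 * (qq n j - pp n j)"
    unfolding AE_all_countable
  proof (intro allI)
    fix n j
    show "AE x in lborel. pp n j \<le> 1 - c \<longrightarrow> x \<in> {pp n j..qq n j} \<longrightarrow> V x \<le> 4 * (qq n j - pp n j)"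
    proof (cases "pp n j \<le> 1 - c")
      case True
      from gint.claim_interval[OF gi[OF True]] show ?thesis
        by (simp add: gint.I_def[OF gi[OF True]] V_def)
    qed simp
  qed
  have V0: "V x = 0" if x: "0 \<le> x" "x \<le> 1 - c" and h: "\<forall>n j. pp n j \<le> 1 - c \<longrightarrow> x \<in> {pp n j..qq n j} \<longrightarrow> V x \<le> 4 * (qq n j - pp n j)" for x
  proof (rule ccontr)
    have "0 \<le> V x" unfolding V_def by (intro integral_nonneg_AE AE_I2) auto
    moreover assume "V x \<noteq> 0"
    ultimately have Vp: "0 < V x" by simp
    obtain n :: nat where n: "4 * c / V x < real n" using reals_Archimedean2 by blast
    have "4 * c < real n * V x" using n Vp by (simp add: field_simps)
    then have "4 * c < (real n + 2) * V x" using Vp by (simp add: algebra_simps)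
    then have ln: "4 * l n < V x" using Vp by (simp add: l_def field_simps)
    define j where "j = nat \<lfloor>x / l n\<rfloor>"
    have xl: "0 \<le> x / l n" using x lpos[of n] by simp
    have j1: "real j \<le> x / l n" using xl by (simp add: j_def)
    have j2: "x / l n < real j + 1" using xl by (simp add: j_def)
    have pj: "pp n j \<le> x" using j1 lpos[of n] by (simp add: pp_def field_simps)
    have qj: "x \<le> qq n j" using j2 lpos[of n] x by (simp add: qq_def field_simps)
    have "V x \<le> 4 * (qq n j - pp n j)" using h pj qj x by auto
    also have "\<dots> \<le> 4 * l n"
    proof -
      have "qq n j \<le> (real j + 1) * l n" by (simp add: qq_def)
      then show ?thesis by (simp add: pp_def algebra_simps)
    qed
    finally show False using ln by simp
  qed
  from ae show ?thesis
  proof eventually_elim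
    case (elim x)
    show ?case
    proof (intro impI)
      assume x: "0 \<le> x \<and> x \<le> 1 - c"
      have "V x = 0" using V0[of x] x elim by auto
      moreover have "integrable lborel (\<lambda>y. indicator {0..1} y * pos (G x y - G (x+c) y))"
        by (rule int_bound[where A="{0..1}" and B=1]) (auto simp: indicator_def)
      ultimately have "AE y in lborel. indicator {0..1} y * pos (G x y - G (x+c) y) = 0"
        unfolding V_def by (subst (asm) integral_nonneg_eq_0_iff_AE) auto
      then show "AE y in lborel. 0 \<le> y \<and> y \<le> 1 \<longrightarrow> G x y \<le> G (x+c) y"
        by eventually_elim (auto simp: indicator_def max_def split: if_splits)
    qed
  qed
qed

end

context gsetup
begin

definition "Q1 c x y = (0 \<le> x \<and> x \<le> 1 - c \<and> 0 \<le> y \<and> y \<le> 1 \<longrightarrow> G x y \<le> G (x + c) y)"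

lemma F1:
  assumes c: "0 < c" "c < 1"
  shows "AE z in M2. Q1 c (fst z) (snd z)"
proof -
  from claim_C[OF c] have "AE x in lborel. AE y in lborel. Q1 c x y"
  proof eventually_elim
    case (elim x)
    show ?case
    proof (cases "0 \<le> x \<and> x \<le> 1 - c")
      case True
      with elim have "AE y in lborel. 0 \<le> y \<and> y \<le> 1 \<longrightarrow> G x y \<le> G (x+c) y" by simp
      then show ?thesis by eventually_elim (auto simp: Q1_def)
    next
      case False then show ?thesis by (intro AE_I2) (auto simp: Q1_def)
    qed
  qed
  moreover have "{z \<in> space M2. Q1 c (fst z) (snd z)} \<in> sets M2"
    unfolding Q1_def by measurable
  ultimately show ?thesis by (simp add: lborel_pair.AE_pair_iff)
qed

lemma F2:
  assumes c: "0 < c" "c < 1"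
  shows "AE z in M2. Q1 c (fst z - c) (snd z)"
proof -
  have m: "{z \<in> space M2. Q1 c (fst z) (snd z)} \<in> sets M2"
    unfolding Q1_def by measurable
  from AE_M2_shift[OF m F1[OF c], of "- c"] show ?thesis by simp
qed

definition "R c x y = (0 < c \<and> c < 1 \<longrightarrow> Q1 c x y \<and> Q1 c (x - c) y)"

lemma F3: "AE z in M2. AE c in lborel. R c (fst z) (snd z)"
proof -
  have h: "AE z in M2. R c (fst z) (snd z)" for c
  proof (cases "0 < c \<and> c < 1")
    case True
    with F1[of c] F2[of c] show ?thesis by (auto simp: R_def)
  qed (auto simp: R_def)
  have "AE c in lborel. AE z in M2. R c (fst z) (snd z)" by (rule AE_I2) (rule h)
  have sf: "sigma_finite_measure M2" by (simp add: lborel_prod sigma_finite_lborel)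
  interpret p: pair_sigma_finite "lborel :: real measure" M2
    by (intro pair_sigma_finite.intro sigma_finite_lborel sf)
  have "{p \<in> space (lborel \<Otimes>\<^sub>M M2). R (fst p) (fst (snd p)) (snd (snd p))} \<in> sets (lborel \<Otimes>\<^sub>M M2)"
    unfolding R_def Q1_def by measurable
  with \<open>AE c in lborel. AE z in M2. R c (fst z) (snd z)\<close> show ?thesis
    by (subst (asm) p.AE_commute) auto
qed

lemma F4:
  assumes x: "x \<in> {0..1}" and y: "y \<in> {0..1}" and ae: "AE c in lborel. R c x y"
  shows "AE t in lborel. \<not> (x < t \<and> t \<le> 1 \<and> G t y < G x y)"
    and "AE t in lborel. \<not> (0 \<le> t \<and> t < x \<and> G x y < G t y)"
proof -
  have ne1: "AE c in lborel. (c::real) \<noteq> 1"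
    using AE_not_in[OF finite_imp_null_set_lborel[of "{1::real}"]] by simp
  have "AE c in lborel. \<not> (x < x + c \<and> x + c \<le> 1 \<and> G (x + c) y < G x y)"
    using ae ne1
  proof eventually_elim
    case (elim c)
    show ?case
    proof
      assume h: "x < x + c \<and> x + c \<le> 1 \<and> G (x + c) y < G x y"
      then have "0 < c" "c < 1" using elim x by auto
      then have "Q1 c x y" using elim by (simp add: R_def)
      then show False using h x y by (simp add: Q1_def)
    qed
  qed
  then show "AE t in lborel. \<not> (x < t \<and> t \<le> 1 \<and> G t y < G x y)"
    by (rule AE_lborel_trans[rotated]) measurable
  have "AE c in lborel. \<not> (0 \<le> x + - c \<and> x + - c < x \<and> G x y < G (x + - c) y)"
    using ae ne1
  proof eventually_elim
    case (elim c)
    show ?case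
    proof
      assume h: "0 \<le> x + - c \<and> x + - c < x \<and> G x y < G (x + - c) y"
      then have "0 < c" "c < 1" using elim x by auto
      then have "Q1 c (x - c) y" using elim by (simp add: R_def)
      then show False using h x y by (simp add: Q1_def)
    qed
  qed
  then have "AE u in lborel. \<not> (0 \<le> x + u \<and> x + u < x \<and> G x y < G (x + u) y)"
    by (rule AE_lborel_neg[rotated]) measurable
  then show "AE t in lborel. \<not> (0 \<le> t \<and> t < x \<and> G x y < G t y)"
    by (rule AE_lborel_trans[rotated]) measurable
qed

lemma main_x: "\<exists>N. N \<in> null_sets M2 \<and> (\<forall>x1 x2 y. x1 \<in> {0..1} \<longrightarrow> x2 \<in> {0..1} \<longrightarrow> y \<in> {0..1} \<longrightarrow>
   x1 \<le> x2 \<longrightarrow> (x1, y) \<notin> N \<longrightarrow> (x2, y) \<notin> N \<longrightarrow> G x1 y \<le> G x2 y)"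
proof -
  define B1 where "B1 x y \<longleftrightarrow> (AE t in lborel. \<not> (x < t \<and> t \<le> 1 \<and> G t y < G x y))" for x y
  define B2 where "B2 x y \<longleftrightarrow> (AE t in lborel. \<not> (0 \<le> t \<and> t < x \<and> G x y < G t y))" for x y
  have "AE z in M2. fst z \<in> {0..1} \<and> snd z \<in> {0..1} \<longrightarrow> B1 (fst z) (snd z) \<and> B2 (fst z) (snd z)"
    using F3 by eventually_elim (use F4 in \<open>auto simp: B1_def B2_def\<close>)
  then obtain N where N: "{z \<in> space M2. \<not> (fst z \<in> {0..1} \<and> snd z \<in> {0..1} \<longrightarrow> B1 (fst z) (snd z) \<and> B2 (fst z) (snd z))} \<subseteq> N"
      "emeasure M2 N = 0" "N \<in> sets M2"
    by (rule AE_E)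
  have good: "B1 x y \<and> B2 x y" if "x \<in> {0..1}" "y \<in> {0..1}" "(x, y) \<notin> N" for x y
  proof (rule ccontr)
    assume "\<not> (B1 x y \<and> B2 x y)"
    then have "(x, y) \<in> {z \<in> space M2. \<not> (fst z \<in> {0..1} \<and> snd z \<in> {0..1} \<longrightarrow> B1 (fst z) (snd z) \<and> B2 (fst z) (snd z))}"
      using that by (simp add: space_pair_measure)
    then show False using N(1) that(3) by blast
  qed
  show ?thesis
  proof (intro exI conjI allI impI)
    show "N \<in> null_sets M2" using N by auto
    fix x1 x2 y :: real
    assume h: "x1 \<in> {0..1}" "x2 \<in> {0..1}" "y \<in> {0..1}" "x1 \<le> x2" "(x1, y) \<notin> N" "(x2, y) \<notin> N"
    have g1: "AE t in lborel. \<not> (x1 < t \<and> t \<le> 1 \<and> G t y < G x1 y)"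
      using good[of x1 y] h unfolding B1_def by blast
    have g2: "AE t in lborel. \<not> (0 \<le> t \<and> t < x2 \<and> G x2 y < G t y)"
      using good[of x2 y] h unfolding B2_def by blast
    show "G x1 y \<le> G x2 y"
    proof (cases "x1 = x2")
      case False
      then have "x1 < x2" using h by simp
      from AE_interval_ex[OF AE_conj_iff[THEN iffD2, OF conjI[OF g1 g2]] this]
      obtain t where t: "x1 < t" "t < x2"
        "\<not> (x1 < t \<and> t \<le> 1 \<and> G t y < G x1 y)" "\<not> (0 \<le> t \<and> t < x2 \<and> G x2 y < G t y)" by blast
      then have "G x1 y \<le> G t y" "G t y \<le> G x2 y" using h by auto
      then show ?thesis by simp
    qed simp
  qed
qed

lemma main_G: "\<exists>N. N \<in> null_sets M2 \<and>
   (\<forall>x1 x2 y. x1 \<in> {0..1} \<longrightarrow> x2 \<in> {0..1} \<longrightarrow> y \<in> {0..1} \<longrightarrow>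
      x1 \<le> x2 \<longrightarrow> (x1, y) \<notin> N \<longrightarrow> (x2, y) \<notin> N \<longrightarrow> G x1 y \<le> G x2 y) \<and>
   (\<forall>x y1 y2. x \<in> {0..1} \<longrightarrow> y1 \<in> {0..1} \<longrightarrow> y2 \<in> {0..1} \<longrightarrow>
      y1 \<le> y2 \<longrightarrow> (x, y1) \<notin> N \<longrightarrow> (x, y2) \<notin> N \<longrightarrow> G x y1 \<le> G x y2)"
proof -
  obtain N where N: "N \<in> null_sets M2" "\<And>x1 x2 y. x1 \<in> {0..1} \<Longrightarrow> x2 \<in> {0..1} \<Longrightarrow> y \<in> {0..1} \<Longrightarrow>
   x1 \<le> x2 \<Longrightarrow> (x1, y) \<notin> N \<Longrightarrow> (x2, y) \<notin> N \<Longrightarrow> G x1 y \<le> G x2 y"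
    using main_x by blast
  have NS: "N \<in> sets M2" using N(1) by auto
  have "AE z in M2. z \<notin> N" by (rule AE_not_in[OF N(1)])
  then have ad: "AE z in distr M2 M2 (\<lambda>(x, y). (y, x)). z \<notin> N"
    by (subst lborel_pair.distr_pair_swap[symmetric])
  have ms: "{x \<in> space M2. x \<notin> N} \<in> sets M2"
  proof -
    have "{x \<in> space M2. x \<notin> N} = space M2 - N" by auto
    then show ?thesis using sets.compl_sets[OF NS] by simp
  qed
  have "AE z in M2. (\<lambda>(x, y). (y, x)) z \<notin> N"
    using ad AE_distr_iff[OF measurable_pair_swap' ms] by simp
  then obtain N2 where N2: "{z \<in> space M2. \<not> ((\<lambda>(x, y). (y, x)) z \<notin> N)} \<subseteq> N2" "emeasure M2 N2 = 0" "N2 \<in> sets M2"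
    by (rule AE_E)
  show ?thesis
  proof (intro exI conjI allI impI)
    have "N2 \<in> null_sets M2" using N2(2,3) by auto
    then show "N \<union> N2 \<in> null_sets M2" using N(1) by (intro null_sets.Un)
    show "G x1 y \<le> G x2 y" if "x1 \<in> {0..1}" "x2 \<in> {0..1}" "y \<in> {0..1}" "x1 \<le> x2"
      "(x1, y) \<notin> N \<union> N2" "(x2, y) \<notin> N \<union> N2" for x1 x2 y
      using N(2)[of x1 x2 y] that by blast
    show "G x y1 \<le> G x y2" if "x \<in> {0..1}" "y1 \<in> {0..1}" "y2 \<in> {0..1}" "y1 \<le> y2"
      "(x, y1) \<notin> N \<union> N2" "(x, y2) \<notin> N \<union> N2" for x y1 y2
    proof -
      have "(x, y1) \<notin> {z \<in> space M2. \<not> ((\<lambda>(x, y). (y, x)) z \<notin> N)}"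
           "(x, y2) \<notin> {z \<in> space M2. \<not> ((\<lambda>(x, y). (y, x)) z \<notin> N)}"
        using that N2(1) by blast+
      then have "(y1, x) \<notin> N" "(y2, x) \<notin> N" by (auto simp: space_pair_measure)
      then have "G y1 x \<le> G y2 x" using N(2)[of y1 y2 x] that by blast
      then show ?thesis by (simp add: G_sym)
    qed
  qed
qed

end

lemma int_lebesgue_on_borel:
  fixes f :: "'a::euclidean_space \<Rightarrow> real"
  assumes f: "f \<in> borel_measurable lborel" and S: "S \<in> sets borel"
  shows "integral\<^sup>L (lebesgue_on S) f = (\<integral>x. indicator S x * f x \<partial>lborel)"
proof -
  have "integral\<^sup>L (lebesgue_on S) f = integral\<^sup>L lebesgue (\<lambda>x. indicator S x *\<^sub>R f x)"
    by (rule integral_restrict_space) (use S in auto)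
  also have "\<dots> = (\<integral>x. indicator S x * f x \<partial>lborel)"
    by (subst integral_completion) (use f S in auto)
  finally show ?thesis .
qed

lemma AE_lebesgue_on:
  fixes S :: "'a::euclidean_space set"
  assumes "AE x in lborel. x \<in> S \<longrightarrow> P x" "S \<in> sets borel"
  shows "AE x in lebesgue_on S. P x"
  by (subst AE_restrict_space_iff) (use assms in \<open>auto intro: AE_completion\<close>)

theorem theorem3p1:
  fixes g :: "real \<Rightarrow> real \<Rightarrow> real"
  assumes "graphon g"
    and "mono_on {0..1} (degree_fun g)"
    and "\<And>h. graphon h \<Longrightarrow>
           (AE x in lebesgue_on {0..1}. degree_fun h x = degree_fun g x) \<Longrightarrow>
           graphon_entropy h \<le> graphon_entropy g"
  shows "\<exists>N :: (real \<times> real) set. N \<in> null_sets lebesgue \<and>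
           (\<forall>x1\<in>{0..1}. \<forall>x2\<in>{0..1}. \<forall>y\<in>{0..1}.
              x1 \<le> x2 \<longrightarrow> (x1, y) \<notin> N \<longrightarrow> (x2, y) \<notin> N \<longrightarrow> g x1 y \<le> g x2 y) \<and>
           (\<forall>x\<in>{0..1}. \<forall>y1\<in>{0..1}. \<forall>y2\<in>{0..1}.
              y1 \<le> y2 \<longrightarrow> (x, y1) \<notin> N \<longrightarrow> (x, y2) \<notin> N \<longrightarrow> g x y1 \<le> g x y2)"
proof -
  have gm: "(\<lambda>(x, y). g x y) \<in> borel_measurable (lebesgue_on ({0..1} \<times> {0..1}))"
    and gsym: "\<And>x y. x \<in> {0..1} \<Longrightarrow> y \<in> {0..1} \<Longrightarrow> g x y = g y x"
    and grange: "\<And>x y. x \<in> {0..1} \<Longrightarrow> y \<in> {0..1} \<Longrightarrow> 0 \<le> g x y \<and> g x y \<le> 1"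
    using assms(1) unfolding graphon_def by auto
  have sqS: "({0..1} \<times> {0..1} :: (real \<times> real) set) \<in> sets borel"
    by (intro borel_closed closed_Times) auto
  have sqL: "({0..1} \<times> {0..1} :: (real \<times> real) set) \<in> sets lebesgue"
    by (rule sets_completionI_sets) (simp add: sqS)
  have fm: "(\<lambda>z. indicator ({0..1} \<times> {0..1}) z *\<^sub>R (case z of (x, y) \<Rightarrow> g x y)) \<in> borel_measurable lebesgue"
    using gm by (subst (asm) borel_measurable_restrict_space_iff) (auto simp: sqL)
  obtain g' where g'm: "g' \<in> borel_measurable lborel"
    and g'ae: "AE z in lborel. indicator ({0..1} \<times> {0..1}) z *\<^sub>R (case z of (x, y) \<Rightarrow> g x y) = g' z"
    using completion_ex_borel_measurable_real[OF fm] by blast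
  have g'm2[measurable]: "g' \<in> borel_measurable M2" using g'm by (simp only: lborel_prod)
  obtain N0 where N0: "{z \<in> space lborel. \<not> (indicator ({0..1} \<times> {0..1}) z *\<^sub>R (case z of (x, y) \<Rightarrow> g x y) = g' z)} \<subseteq> N0"
    "emeasure lborel N0 = 0" "N0 \<in> sets lborel"
    using g'ae by (rule AE_E)
  have N0n: "N0 \<in> null_sets lborel" using N0 by auto
  have N0M: "N0 \<in> sets M2" "N0 \<in> null_sets M2" using N0n by (simp_all only: lborel_prod null_setsD2)
  have ae1: "AE z in M2. z \<notin> N0" by (rule AE_not_in[OF N0M(2)])
  have ms: "{x \<in> space M2. x \<notin> N0} \<in> sets M2"
  proof -
    have "{x \<in> space M2. x \<notin> N0} = space M2 - N0" by auto
    then show ?thesis using sets.compl_sets[OF N0M(1)] by simp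
  qed
  have "AE z in distr M2 M2 (\<lambda>(x, y). (y, x)). z \<notin> N0"
    using ae1 by (subst lborel_pair.distr_pair_swap[symmetric])
  then have ae2: "AE z in M2. (\<lambda>(x, y). (y, x)) z \<notin> N0"
    using AE_distr_iff[OF measurable_pair_swap' ms] by simp
  define G where "G x y = max 0 (min 1 ((g' (x, y) + g' (y, x)) / 2))" for x y
  have Gm: "case_prod G \<in> borel_measurable M2"
    unfolding G_def[abs_def] by measurable
  have eq: "AE z in M2. z \<in> {0..1} \<times> {0..1} \<longrightarrow> G (fst z) (snd z) = g (fst z) (snd z)"
    using ae1 ae2
  proof eventually_elim
    case (elim z)
    obtain x y where z: "z = (x, y)" by (cases z)
    show ?case
    proof
      assume sq: "z \<in> {0..1} \<times> {0..1}"
      have n1: "(x, y) \<notin> {z \<in> space lborel. \<not> (indicator ({0..1} \<times> {0..1}) z *\<^sub>R (case z of (x, y) \<Rightarrow> g x y) = g' z)}"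
        using elim(1) N0(1) z by blast
      have n2: "(y, x) \<notin> {z \<in> space lborel. \<not> (indicator ({0..1} \<times> {0..1}) z *\<^sub>R (case z of (x, y) \<Rightarrow> g x y) = g' z)}"
      proof -
        have "(y, x) \<notin> N0" using elim(2) z by simp
        then show ?thesis using N0(1) by blast
      qed
      have "g' (x, y) = g x y" using n1 z sq by (simp add: indicator_def)
      moreover have "g' (y, x) = g y x" using n2 z sq by (simp add: indicator_def)
      moreover have "g y x = g x y" using gsym sq z by auto
      ultimately show "G (fst z) (snd z) = g (fst z) (snd z)"
        using grange[of x y] sq z by (simp add: G_def)
    qed
  qed
  define DG where "DG x = (\<integral>y. indicator {0..1} y * G x y \<partial>lborel)" for x
  have deg_eq: "AE x in lborel. x \<in> {0..1} \<longrightarrow> degree_fun g x = DG x"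
    using lborel_pair.AE_pair[OF eq]
  proof eventually_elim
    case (elim x)
    show ?case
    proof
      assume x: "x \<in> {0..1}"
      have Gx[measurable]: "(\<lambda>y. G x y) \<in> borel_measurable lborel"
        using Gm by measurable
      have h1m: "(\<lambda>y. indicator {0..1} y * G x y) \<in> borel_measurable lebesgue"
        by (rule measurable_completion) measurable
      have aeL: "AE y in lborel. indicator {0..1} y * G x y = indicator {0..1} y *\<^sub>R g x y"
        using elim
      proof eventually_elim
        case (elim y) then show ?case using x by (auto simp: indicator_def)
      qed
      then have aeL': "AE y in lebesgue. indicator {0..1} y * G x y = indicator {0..1} y *\<^sub>R g x y"
        by (rule AE_completion)
      have h0m: "(\<lambda>y. indicator {0..1} y *\<^sub>R g x y) \<in> borel_measurable lebesgue"
        by (rule borel_measurable_AE[OF h1m aeL'])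
      have "degree_fun g x = integral\<^sup>L lebesgue (\<lambda>y. indicator {0..1} y *\<^sub>R g x y)"
        unfolding degree_fun_def by (rule integral_restrict_space) auto
      also have "\<dots> = integral\<^sup>L lebesgue (\<lambda>y. indicator {0..1} y * G x y)"
        by (rule integral_cong_AE[OF h0m h1m]) (use aeL' in \<open>auto elim: AE_mp\<close>)
      also have "\<dots> = DG x"
        unfolding DG_def by (rule integral_completion) measurable
      finally show "degree_fun g x = DG x" .
    qed
  qed
  obtain Z where Z: "{x \<in> space lborel. \<not> (x \<in> {0..1} \<longrightarrow> degree_fun g x = DG x)} \<subseteq> Z"
    "emeasure lborel Z = 0" "Z \<in> sets lborel"
    using deg_eq by (rule AE_E)
  have degZ: "x \<in> {0..1} \<Longrightarrow> x \<notin> Z \<Longrightarrow> degree_fun g x = DG x" for x using Z(1) by auto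
  interpret gs: gsetup G Z
  proof
    show "case_prod G \<in> borel_measurable M2" by (rule Gm)
    show "G x y = G y x" for x y by (simp add: G_def add.commute)
    show "0 \<le> G x y" for x y by (simp add: G_def)
    show "G x y \<le> 1" for x y by (simp add: G_def)
    show "Z \<in> null_sets lborel" using Z by auto
    show "(\<integral>y. indicator {0..1} y * G x1 y \<partial>lborel) \<le> (\<integral>y. indicator {0..1} y * G x2 y \<partial>lborel)"
      if "x1 \<in> {0..1}" "x2 \<in> {0..1}" "x1 \<notin> Z" "x2 \<notin> Z" "x1 \<le> x2" for x1 x2
      using mono_onD[OF assms(2), of x1 x2] that degZ[of x1] degZ[of x2] by (simp add: DG_def)
  next
    fix H :: "real \<Rightarrow> real \<Rightarrow> real"
    assume Hm: "case_prod H \<in> borel_measurable M2" and Hsym: "\<And>x y. H x y = H y x"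
      and Hr: "\<And>x y. x \<in> {0..1} \<Longrightarrow> y \<in> {0..1} \<Longrightarrow> 0 \<le> H x y \<and> H x y \<le> 1"
      and Hd: "\<And>x. x \<in> {0..1} \<Longrightarrow> (\<integral>y. indicator {0..1} y * H x y \<partial>lborel) = (\<integral>y. indicator {0..1} y * G x y \<partial>lborel)"
    have Hm1[measurable]: "case_prod H \<in> borel_measurable lborel" using Hm by (simp add: lborel_prod)
    have grH: "graphon H"
      unfolding graphon_def
    proof (intro conjI ballI)
      show "(\<lambda>(x, y). H x y) \<in> borel_measurable (lebesgue_on ({0..1} \<times> {0..1}))"
        by (intro measurable_restrict_space1 measurable_completion Hm1)
    qed (use Hsym Hr in auto)
    have degH: "AE x in lebesgue_on {0..1}. degree_fun H x = degree_fun g x"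
    proof (rule AE_lebesgue_on)
      show "AE x in lborel. x \<in> {0..1} \<longrightarrow> degree_fun H x = degree_fun g x"
        using deg_eq
      proof eventually_elim
        case (elim x)
        show ?case
        proof
          assume x: "x \<in> {0..1}"
          have [measurable]: "(\<lambda>y. H x y) \<in> borel_measurable lborel" using Hm by measurable
          have "degree_fun H x = (\<integral>y. indicator {0..1} y * H x y \<partial>lborel)"
            unfolding degree_fun_def by (rule int_lebesgue_on_borel) auto
          then show "degree_fun H x = degree_fun g x" using Hd[OF x] elim x by (simp add: DG_def)
        qed
      qed
    qed simp
    have entH: "graphon_entropy H = (\<integral>z. indicator ({0..1}\<times>{0..1}) z * bin_entropy (case_prod H z) \<partial>M2) / 2"
    proof -
      have "(\<lambda>z. bin_entropy (case_prod H z)) \<in> borel_measurable lborel" by measurable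
      from int_lebesgue_on_borel[OF this sqS] show ?thesis
        by (simp add: graphon_entropy_def lborel_prod case_prod_beta')
    qed
    have entg: "graphon_entropy g = (\<integral>z. indicator ({0..1}\<times>{0..1}) z * bin_entropy (case_prod G z) \<partial>M2) / 2"
    proof -
      have Sg: "(\<lambda>z. bin_entropy (case z of (x, y) \<Rightarrow> g x y)) \<in> borel_measurable (lebesgue_on ({0..1} \<times> {0..1}))"
        using measurable_compose[OF gm S_measurable] by (simp add: case_prod_beta')
      have Sgm: "(\<lambda>z. indicator ({0..1} \<times> {0..1}) z *\<^sub>R bin_entropy (case z of (x, y) \<Rightarrow> g x y)) \<in> borel_measurable lebesgue"
        using Sg by (subst (asm) borel_measurable_restrict_space_iff) (auto simp: sqL)
      have SGm: "(\<lambda>z. indicator ({0..1}\<times>{0..1}) z * bin_entropy (case_prod G z)) \<in> borel_measurable lborel"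
        using Gm by (simp add: lborel_prod[symmetric]) measurable
      have aeS: "AE z in lebesgue. indicator ({0..1} \<times> {0..1}) z *\<^sub>R bin_entropy (case z of (x, y) \<Rightarrow> g x y)
          = indicator ({0..1}\<times>{0..1}) z * bin_entropy (case_prod G z)"
      proof (rule AE_completion)
        show "AE z in lborel. indicator ({0..1} \<times> {0..1}) z *\<^sub>R bin_entropy (case z of (x, y) \<Rightarrow> g x y)
          = indicator ({0..1}\<times>{0..1}) z * bin_entropy (case_prod G z)"
          using eq unfolding lborel_prod
        proof eventually_elim
          case (elim z) then show ?case by (cases z) (auto simp: indicator_def)
        qed
      qed
      have "graphon_entropy g = integral\<^sup>L lebesgue (\<lambda>z. indicator ({0..1} \<times> {0..1}) z *\<^sub>R bin_entropy (case z of (x, y) \<Rightarrow> g x y)) / 2"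
        unfolding graphon_entropy_def by (subst integral_restrict_space) (auto simp: case_prod_beta' sqL)
      also have "\<dots> = integral\<^sup>L lebesgue (\<lambda>z. indicator ({0..1}\<times>{0..1}) z * bin_entropy (case_prod G z)) / 2"
        by (subst integral_cong_AE[OF Sgm measurable_completion[OF SGm] aeS]) simp
      also have "\<dots> = (\<integral>z. indicator ({0..1}\<times>{0..1}) z * bin_entropy (case_prod G z) \<partial>M2) / 2"
        by (subst integral_completion[OF SGm]) (simp add: lborel_prod)
      finally show ?thesis .
    qed
    show "(\<integral>z. indicator ({0..1}\<times>{0..1}) z * bin_entropy (case_prod H z) \<partial>M2)
          \<le> (\<integral>z. indicator ({0..1}\<times>{0..1}) z * bin_entropy (case_prod G z) \<partial>M2)"
      using assms(3)[OF grH degH] entH entg by simp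
  qed
  obtain N where N: "N \<in> null_sets M2"
    "\<And>x1 x2 y. x1 \<in> {0..1} \<Longrightarrow> x2 \<in> {0..1} \<Longrightarrow> y \<in> {0..1} \<Longrightarrow>
      x1 \<le> x2 \<Longrightarrow> (x1, y) \<notin> N \<Longrightarrow> (x2, y) \<notin> N \<Longrightarrow> G x1 y \<le> G x2 y"
    "\<And>x y1 y2. x \<in> {0..1} \<Longrightarrow> y1 \<in> {0..1} \<Longrightarrow> y2 \<in> {0..1} \<Longrightarrow>
      y1 \<le> y2 \<Longrightarrow> (x, y1) \<notin> N \<Longrightarrow> (x, y2) \<notin> N \<Longrightarrow> G x y1 \<le> G x y2"
    using gs.main_G by blast
  obtain E where E: "{z \<in> space M2. \<not> (z \<in> {0..1} \<times> {0..1} \<longrightarrow> G (fst z) (snd z) = g (fst z) (snd z))} \<subseteq> E"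
    "emeasure M2 E = 0" "E \<in> sets M2"
    using eq by (rule AE_E)
  have GE: "G x y = g x y" if "x \<in> {0..1}" "y \<in> {0..1}" "(x, y) \<notin> E" for x y
  proof (rule ccontr)
    assume "G x y \<noteq> g x y"
    then have "(x, y) \<in> {z \<in> space M2. \<not> (z \<in> {0..1} \<times> {0..1} \<longrightarrow> G (fst z) (snd z) = g (fst z) (snd z))}"
      using that by (simp add: space_pair_measure)
    then show False using E(1) that(3) by blast
  qed
  have En: "E \<in> null_sets M2" using E(2,3) by auto
  have NE: "N \<union> E \<in> null_sets M2" using N(1) En by (intro null_sets.Un)
  show ?thesis
  proof (intro exI conjI ballI impI)
    show "N \<union> E \<in> null_sets lebesgue"
      using NE by (intro null_sets_completionI) (simp only: lborel_prod)
    show "g x1 y \<le> g x2 y" if "x1 \<in> {0..1}" "x2 \<in> {0..1}" "y \<in> {0..1}" "x1 \<le> x2"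
      "(x1, y) \<notin> N \<union> E" "(x2, y) \<notin> N \<union> E" for x1 x2 y
      using N(2)[of x1 x2 y] GE[of x1 y] GE[of x2 y] that by auto
    show "g x y1 \<le> g x y2" if "x \<in> {0..1}" "y1 \<in> {0..1}" "y2 \<in> {0..1}" "y1 \<le> y2"
      "(x, y1) \<notin> N \<union> E" "(x, y2) \<notin> N \<union> E" for x y1 y2
      using N(3)[of x y1 y2] GE[of x y1] GE[of x y2] that by auto
  qed
qed

end
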